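(* Let $U$ be a finite universe of $n$ pages, and let $C^0_0=\emptyset$ and $C^1_0,\dots,C^n_0\subseteq U$ be initial configurations with $|C^m_0|=m$ and $C^{m}_0\subset C^{m+1}_0$ for all $0\le m<n$. Then for every request sequence $\sigma$ over $U$, every time $t\ge 0$ and every $1\le m\le n$, we have $C^{m-1}_t(\sigma)\subset C^m_t(\sigma)$.
   Context: Unweighted paging over a finite universe $U$ of $n$ pages with request sequence $\sigma=(\sigma_1,\sigma_2,\dots)$. Fix a total order on $U$ used for tie-breaking. For a page $p$ and time $t$, its next-request time after $t$ is $\min\{s>t:\sigma_s=p\}$ ($=\infty$ if there is none); page $p$ is "farther in the future" than $p'$ at time $t$ if its next-request time is larger, or equal and $p$ comes later in the fixed order. For $1\le m\le n$, $\mathrm{FiF}^m$ (Belady's Farthest-in-Future algorithm with cache size $m$) starts from configuration $C^m_0$ with $|C^m_0|=m$; on request $\sigma_t$, if $\sigma_t$ is in its cache it does nothing, and otherwise it loads $\sigma_t$ and evicts the page of its current cache that is farthest in the future (as of time $t-1$, i.e. among next-request times after $t-1$ excluding the current request page which is being loaded). $C^m_t(\sigma)$ denotes the cache of $\mathrm{FiF}^m$ after serving $\sigma_1,\dots,\sigma_t$, and $C^0_t=\emptyset$ for all $t$. *)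

theory Defs
  imports Main "HOL-Library.Extended_Nat"
begin

text \<open>A request sequence is sigma :: nat => 'a, with requests sigma 1, sigma 2, ...,
  sigma L, where L :: enat is its length (L = infinity for infinite sequences).
  The fixed total order used for tie-breaking is the linorder on 'a.\<close>

definition next_req :: "(nat \<Rightarrow> 'a) \<Rightarrow> enat \<Rightarrow> nat \<Rightarrow> 'a \<Rightarrow> enat" where
  "next_req \<sigma> L t p =
     (if \<exists>s. t < s \<and> enat s \<le> L \<and> \<sigma> s = p
      then enat (LEAST s. t < s \<and> enat s \<le> L \<and> \<sigma> s = p) else \<infinity>)"

definition farther :: "(nat \<Rightarrow> 'a::linorder) \<Rightarrow> enat \<Rightarrow> nat \<Rightarrow> 'a \<Rightarrow> 'a \<Rightarrow> bool" where
  "farther \<sigma> L t p p' \<longleftrightarrow>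
     next_req \<sigma> L t p > next_req \<sigma> L t p' \<or>
     (next_req \<sigma> L t p = next_req \<sigma> L t p' \<and> p > p')"

definition victim :: "(nat \<Rightarrow> 'a::linorder) \<Rightarrow> enat \<Rightarrow> nat \<Rightarrow> 'a set \<Rightarrow> 'a" where
  "victim \<sigma> L t C = (THE p. p \<in> C \<and> (\<forall>q\<in>C. q \<noteq> p \<longrightarrow> farther \<sigma> L t p q))"

text \<open>One step of FiF serving request sigma t (t >= 1); eviction uses next-request
  times after t - 1.\<close>
definition fif_step :: "(nat \<Rightarrow> 'a::linorder) \<Rightarrow> enat \<Rightarrow> nat \<Rightarrow> 'a set \<Rightarrow> 'a set" where
  "fif_step \<sigma> L t C =
     (if \<sigma> t \<in> C then C else insert (\<sigma> t) (C - {victim \<sigma> L (t - 1) C}))"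

fun fif :: "(nat \<Rightarrow> 'a::linorder) \<Rightarrow> enat \<Rightarrow> 'a set \<Rightarrow> nat \<Rightarrow> 'a set" where
  "fif \<sigma> L C0 0 = C0"
| "fif \<sigma> L C0 (Suc t) = fif_step \<sigma> L (Suc t) (fif \<sigma> L C0 t)"

definition cache :: "(nat \<Rightarrow> 'a::linorder) \<Rightarrow> enat \<Rightarrow> (nat \<Rightarrow> 'a set) \<Rightarrow> nat \<Rightarrow> nat \<Rightarrow> 'a set" where
  "cache \<sigma> L Cinit m t = (if m = 0 then {} else fif \<sigma> L (Cinit m) t)"

end

theory Submission
  imports Defs
begin

lemma farther_asym: "farther \<sigma> L t p q \<Longrightarrow> \<not> farther \<sigma> L t q p"
  unfolding farther_def by auto

lemma farther_trans: "farther \<sigma> L t p q \<Longrightarrow> farther \<sigma> L t q r \<Longrightarrow> farther \<sigma> L t p r"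
  unfolding farther_def by auto

lemma farther_total: "p \<noteq> q \<Longrightarrow> farther \<sigma> L t p q \<or> farther \<sigma> L t q p"
  unfolding farther_def by (auto simp: neq_iff)

lemma victim_ex:
  assumes "finite C" "C \<noteq> {}"
  shows "\<exists>p. p \<in> C \<and> (\<forall>q\<in>C. q \<noteq> p \<longrightarrow> farther \<sigma> L t p q)"
  using assms
proof (induction C rule: finite_ne_induct)
  case (singleton x) then show ?case by auto
next
  case (insert a C)
  then obtain p where p: "p \<in> C" "\<forall>q\<in>C. q \<noteq> p \<longrightarrow> farther \<sigma> L t p q" by blast
  have "a \<noteq> p" using insert p by auto
  then consider "farther \<sigma> L t a p" | "farther \<sigma> L t p a" using farther_total by blast
  then show ?case
  proof cases
    case 1
    then show ?thesis using p insert by (metis farther_trans insertE insertI1)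
  next
    case 2
    then show ?thesis using p by auto
  qed
qed

lemma victim_prop:
  assumes "finite C" "C \<noteq> {}"
  shows "victim \<sigma> L t C \<in> C \<and> (\<forall>q\<in>C. q \<noteq> victim \<sigma> L t C \<longrightarrow> farther \<sigma> L t (victim \<sigma> L t C) q)"
proof -
  obtain p where p: "p \<in> C" "\<forall>q\<in>C. q \<noteq> p \<longrightarrow> farther \<sigma> L t p q"
    using victim_ex[OF assms] by blast
  have u: "\<And>p'. p' \<in> C \<and> (\<forall>q\<in>C. q \<noteq> p' \<longrightarrow> farther \<sigma> L t p' q) \<Longrightarrow> p' = p"
  proof (rule ccontr)
    fix p' assume h: "p' \<in> C \<and> (\<forall>q\<in>C. q \<noteq> p' \<longrightarrow> farther \<sigma> L t p' q)" "p' \<noteq> p"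
    hence "farther \<sigma> L t p' p" "farther \<sigma> L t p p'" using p by auto
    thus False using farther_asym by blast
  qed
  show ?thesis unfolding victim_def
  proof (rule theI[of _ p])
    show "p \<in> C \<and> (\<forall>q\<in>C. q \<noteq> p \<longrightarrow> farther \<sigma> L t p q)" using p by blast
  next
    fix x assume "x \<in> C \<and> (\<forall>q\<in>C. q \<noteq> x \<longrightarrow> farther \<sigma> L t x q)"
    then show "x = p" by (rule u)
  qed
qed

lemma victim_eq:
  assumes "finite A" "x \<notin> A" "victim \<sigma> L t (insert x A) \<noteq> x"
  shows "victim \<sigma> L t A = victim \<sigma> L t (insert x A)"
proof -
  let ?v = "victim \<sigma> L t (insert x A)"
  have vb: "?v \<in> insert x A \<and> (\<forall>q\<in>insert x A. q \<noteq> ?v \<longrightarrow> farther \<sigma> L t ?v q)"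
    using victim_prop[of "insert x A"] assms by auto
  hence "?v \<in> A" using assms by auto
  hence ne: "A \<noteq> {}" by auto
  have va: "victim \<sigma> L t A \<in> A \<and> (\<forall>q\<in>A. q \<noteq> victim \<sigma> L t A \<longrightarrow> farther \<sigma> L t (victim \<sigma> L t A) q)"
    using victim_prop[OF assms(1) ne] by blast
  show ?thesis
  proof (rule ccontr)
    assume "victim \<sigma> L t A \<noteq> ?v"
    hence "farther \<sigma> L t (victim \<sigma> L t A) ?v" "farther \<sigma> L t ?v (victim \<sigma> L t A)"
      using va vb \<open>?v \<in> A\<close> by auto
    thus False using farther_asym by blast
  qed
qed

lemma step_nonempty:
  assumes "finite A" "A \<noteq> {}" "x \<notin> A"
  shows "finite (fif_step \<sigma> L t A) \<and> (\<exists>y. y \<notin> fif_step \<sigma> L t A \<and>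
           fif_step \<sigma> L t (insert x A) = insert y (fif_step \<sigma> L t A))"
proof -
  let ?r = "\<sigma> t"
  let ?va = "victim \<sigma> L (t - 1) A"
  let ?vb = "victim \<sigma> L (t - 1) (insert x A)"
  have va: "?va \<in> A" using victim_prop[OF assms(1,2)] by blast
  have fin: "finite (fif_step \<sigma> L t A)" using assms(1) unfolding fif_step_def by auto
  show ?thesis
  proof (cases "?r \<in> A")
    case True
    then show ?thesis using fin assms by (auto simp: fif_step_def)
  next
    case nA: False
    show ?thesis
    proof (cases "?r = x")
      case True
      have "?va \<notin> fif_step \<sigma> L t A \<and> fif_step \<sigma> L t (insert x A) = insert ?va (fif_step \<sigma> L t A)"
        using nA True va assms by (auto simp: fif_step_def)
      then show ?thesis using fin by blast
    next
      case nx: False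
      show ?thesis
      proof (cases "?vb = x")
        case True
        have "?va \<notin> fif_step \<sigma> L t A \<and> fif_step \<sigma> L t (insert x A) = insert ?va (fif_step \<sigma> L t A)"
          using nA nx True va assms by (auto simp: fif_step_def)
        then show ?thesis using fin by blast
      next
        case False
        have eq: "?va = ?vb" using victim_eq[OF assms(1,3) False] by simp
        have "x \<notin> fif_step \<sigma> L t A \<and> fif_step \<sigma> L t (insert x A) = insert x (fif_step \<sigma> L t A)"
          using nA nx False eq va assms by (auto simp: fif_step_def)
        then show ?thesis using fin by blast
      qed
    qed
  qed
qed

lemma step_empty: "\<exists>y. fif_step \<sigma> L t {x} = {y}"
  using victim_prop[of "{x}" \<sigma> L "t - 1"] by (auto simp: fif_step_def)

theorem lemma1:
  fixes U :: "'a::linorder set" and n :: nat and Cinit :: "nat \<Rightarrow> 'a set"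
    and \<sigma> :: "nat \<Rightarrow> 'a" and L :: enat
  assumes "finite U" and "card U = n"
    and "Cinit 0 = {}"
    and "\<forall>m\<le>n. Cinit m \<subseteq> U \<and> card (Cinit m) = m"
    and "\<forall>m<n. Cinit m \<subset> Cinit (Suc m)"
    and "\<forall>s. 1 \<le> s \<and> enat s \<le> L \<longrightarrow> \<sigma> s \<in> U"
  shows "\<forall>t. enat t \<le> L \<longrightarrow> (\<forall>m. 1 \<le> m \<and> m \<le> n \<longrightarrow>
           cache \<sigma> L Cinit (m - 1) t \<subset> cache \<sigma> L Cinit m t)"
proof -
  have inv: "\<forall>m. 1 \<le> m \<and> m \<le> n \<longrightarrow> finite (cache \<sigma> L Cinit (m - 1) t) \<and>
     (\<exists>x. x \<notin> cache \<sigma> L Cinit (m - 1) t \<and> cache \<sigma> L Cinit m t = insert x (cache \<sigma> L Cinit (m - 1) t))" for t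
  proof (induction t)
    case 0
    show ?case
    proof (intro allI impI)
      fix m assume m: "1 \<le> m \<and> m \<le> n"
      have c0: "cache \<sigma> L Cinit k 0 = Cinit k" for k using assms(3) by (simp add: cache_def)
      have sub: "Cinit (m-1) \<subset> Cinit m" 
      proof -
        have "m - 1 < n" using m by auto
        hence "Cinit (m-1) \<subset> Cinit (Suc (m-1))" using assms(5) by blast
        moreover have "Suc (m-1) = m" using m by auto
        ultimately show ?thesis by simp
      qed
      have fm: "finite (Cinit m)" using assms(1,4) m finite_subset by blast
      have fm1: "finite (Cinit (m-1))" using sub fm finite_subset by blast
      have cm: "card (Cinit m) = m" "card (Cinit (m-1)) = m - 1" using assms(4) m by auto
      have "card (Cinit m - Cinit (m-1)) = 1" using card_Diff_subset[OF fm1] sub cm m by auto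
      then obtain x where x: "Cinit m - Cinit (m-1) = {x}" using card_1_singletonE by blast
      hence "x \<notin> Cinit (m-1) \<and> Cinit m = insert x (Cinit (m-1))" using sub by blast
      then show "finite (cache \<sigma> L Cinit (m - 1) 0) \<and>
        (\<exists>x. x \<notin> cache \<sigma> L Cinit (m - 1) 0 \<and> cache \<sigma> L Cinit m 0 = insert x (cache \<sigma> L Cinit (m - 1) 0))"
        using fm1 c0 by auto
    qed
  next
    case (Suc t)
    show ?case
    proof (intro allI impI)
      fix m assume m: "1 \<le> m \<and> m \<le> n"
      obtain x where x: "finite (cache \<sigma> L Cinit (m - 1) t)" "x \<notin> cache \<sigma> L Cinit (m - 1) t"
        "cache \<sigma> L Cinit m t = insert x (cache \<sigma> L Cinit (m - 1) t)" using Suc m by blast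
      have cm: "cache \<sigma> L Cinit m (Suc t) = fif_step \<sigma> L (Suc t) (cache \<sigma> L Cinit m t)"
        using m by (simp add: cache_def)
      show "finite (cache \<sigma> L Cinit (m - 1) (Suc t)) \<and>
        (\<exists>x. x \<notin> cache \<sigma> L Cinit (m - 1) (Suc t) \<and> cache \<sigma> L Cinit m (Suc t) = insert x (cache \<sigma> L Cinit (m - 1) (Suc t)))"
      proof (cases "m = 1")
        case True
        have e: "cache \<sigma> L Cinit (m - 1) k = {}" for k using True by (simp add: cache_def)
        obtain y where "fif_step \<sigma> L (Suc t) {x} = {y}" using step_empty by blast
        then show ?thesis using cm x e by auto
      next
        case False
        have cm1: "cache \<sigma> L Cinit (m-1) (Suc t) = fif_step \<sigma> L (Suc t) (cache \<sigma> L Cinit (m-1) t)"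
          using False m by (simp add: cache_def)
        have ne: "cache \<sigma> L Cinit (m-1) t \<noteq> {}"
          using Suc[rule_format, of "m-1"] False m by fastforce
        show ?thesis using step_nonempty[OF x(1) ne x(2), of \<sigma> L "Suc t"] cm cm1 x(3) by simp
      qed
    qed
  qed
  show ?thesis
  proof (intro allI impI)
    fix t m assume "1 \<le> m \<and> m \<le> n"
    then show "cache \<sigma> L Cinit (m - 1) t \<subset> cache \<sigma> L Cinit m t" using inv[of t] by blast
  qed
qed

end
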